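(* Let $R\subseteq S_n$ be a top-$k$ partial ranking, $\sigma\in R$ and $\tau\in S_n$. Then $$d(A_R(\sigma),\tau)=d(\sigma,\tau)+\binom{n-k}2-2\,d(\sigma,\Pi_R(\tau)).$$
   Context: $S_n$ is the symmetric group on $[n]$; $\sigma\in S_n$ is identified with the full ranking $\sigma(1)\succ\cdots\succ\sigma(n)$. For distinct items $x,y$, $\{x,y\}$ is discordant for $\sigma,\tau$ if $(\sigma^{-1}(x)-\sigma^{-1}(y))(\tau^{-1}(x)-\tau^{-1}(y))<0$. The Kendall distance $d(\sigma,\tau)$ is the number of unordered discordant pairs. For $0\le k\le n$ and distinct $a_1,\dots,a_k\in[n]$, the top-$k$ partial ranking is the set $R=\{\sigma\in S_n:\sigma(i)=a_i,\ i\le k\}$. The antithetic operator $A_R:R\to R$ is $A_R(\sigma)(i)=a_i$ for $i\le k$ and $A_R(\sigma)(k+j)=\sigma(n+1-j)$ for $j=1,\dots,n-k$. For $\tau\in S_n$, $\Pi_R(\tau)$ denotes the unique element of $R$ minimising $\rho\mapsto d(\rho,\tau)$ over $\rho\in R$. *)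

theory Defs
  imports "HOL-Combinatorics.Combinatorics"
begin

text \<open>Rankings: a permutation sigma of {1..n} (sigma permutes {1..n}), sigma i is the item
  at position i; the position of item x is inv sigma x.\<close>

definition discordant :: "(nat \<Rightarrow> nat) \<Rightarrow> (nat \<Rightarrow> nat) \<Rightarrow> nat \<Rightarrow> nat \<Rightarrow> bool" where
  "discordant \<sigma> \<tau> x y \<longleftrightarrow>
     (int (inv \<sigma> x) - int (inv \<sigma> y)) * (int (inv \<tau> x) - int (inv \<tau> y)) < 0"

definition kendall :: "nat \<Rightarrow> (nat \<Rightarrow> nat) \<Rightarrow> (nat \<Rightarrow> nat) \<Rightarrow> nat" where
  "kendall n \<sigma> \<tau> = card {(x, y). x \<in> {1..n} \<and> y \<in> {1..n} \<and> x < y \<and> discordant \<sigma> \<tau> x y}"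

definition topk :: "nat \<Rightarrow> nat \<Rightarrow> (nat \<Rightarrow> nat) \<Rightarrow> (nat \<Rightarrow> nat) set" where
  "topk n k a = {\<sigma>. \<sigma> permutes {1..n} \<and> (\<forall>i\<in>{1..k}. \<sigma> i = a i)}"

text \<open>Antithetic operator A_R (only meaningful on R; extended by identity outside [n]).\<close>
definition antithetic :: "nat \<Rightarrow> nat \<Rightarrow> (nat \<Rightarrow> nat) \<Rightarrow> (nat \<Rightarrow> nat) \<Rightarrow> (nat \<Rightarrow> nat)" where
  "antithetic n k a \<sigma> = (\<lambda>i. if i \<in> {1..k} then a i
                              else if i \<in> {k+1..n} then \<sigma> (n + 1 - (i - k))
                              else i)"

definition proj :: "nat \<Rightarrow> nat \<Rightarrow> (nat \<Rightarrow> nat) \<Rightarrow> (nat \<Rightarrow> nat) \<Rightarrow> (nat \<Rightarrow> nat)" where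
  "proj n k a \<tau> = (THE \<rho>. \<rho> \<in> topk n k a \<and>
                      (\<forall>\<rho>'\<in>topk n k a. kendall n \<rho> \<tau> \<le> kendall n \<rho>' \<tau>))"

end

theory Submission
  imports Defs
begin

lemma disc_iff:
  "inv \<rho> x \<noteq> inv \<rho> y \<Longrightarrow> inv \<tau> x \<noteq> inv \<tau> y \<Longrightarrow>
   discordant \<rho> \<tau> x y \<longleftrightarrow> ((inv \<rho> x < inv \<rho> y) \<noteq> (inv \<tau> x < inv \<tau> y))"
  unfolding discordant_def by (auto simp: mult_less_0_iff)

lemma perm_inv_eq: "\<rho> permutes S \<Longrightarrow> inv \<rho> x = i \<longleftrightarrow> \<rho> i = x"
  using bij_inv_eq_iff[OF permutes_bij, of \<rho> S i x] by auto

lemma perm_inv_neq: "\<rho> permutes S \<Longrightarrow> x \<noteq> y \<Longrightarrow> inv \<rho> x \<noteq> inv \<rho> y"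
  using permutes_inverses(1)[of \<rho> S x] permutes_inverses(1)[of \<rho> S y] by auto

lemma perm_inv_in: "\<rho> permutes S \<Longrightarrow> x \<in> S \<Longrightarrow> inv \<rho> x \<in> S"
  by (simp add: permutes_in_image permutes_inv)

locale L =
  fixes n k :: nat and a \<tau> :: "nat \<Rightarrow> nat"
  assumes kn: "k \<le> n" and inja: "inj_on a {1..k}" and ima: "a ` {1..k} \<subseteq> {1..n}"
    and tau: "\<tau> permutes {1..n}"
begin

definition "T = a ` {1..k}"
definition "B = {1..n} - T"
definition "P = {(x,y). x \<in> {1..n} \<and> y \<in> {1..n} \<and> x < y}"
definition "PB = {(x,y). x \<in> B \<and> y \<in> B \<and> x < y}"
definition "PO = P - PB"
definition "Dset A \<rho> \<tau>' = {(x,y). (x,y) \<in> A \<and> discordant \<rho> \<tau>' x y}"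

lemma B_sub: "B \<subseteq> {1..n}" unfolding B_def by auto
lemma PB_sub: "PB \<subseteq> P" using B_sub unfolding PB_def P_def by auto
lemma finP: "finite P"
proof -
  have "P \<subseteq> {1..n} \<times> {1..n}" unfolding P_def by auto
  then show ?thesis using finite_subset by blast
qed
lemma finPB: "finite PB" using PB_sub finP finite_subset by blast
lemma finPO: "finite PO" using finP unfolding PO_def by auto

lemma kendall_split:
  "kendall n \<rho> \<tau>' = card (Dset PO \<rho> \<tau>') + card (Dset PB \<rho> \<tau>')"
proof -
  have e: "{(x, y). x \<in> {1..n} \<and> y \<in> {1..n} \<and> x < y \<and> discordant \<rho> \<tau>' x y}
      = Dset PO \<rho> \<tau>' \<union> Dset PB \<rho> \<tau>'"
    using PB_sub unfolding Dset_def PO_def P_def by auto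
  have "card (Dset PO \<rho> \<tau>' \<union> Dset PB \<rho> \<tau>') = card (Dset PO \<rho> \<tau>') + card (Dset PB \<rho> \<tau>')"
    apply (rule card_Un_disjoint)
    using finPO finPB unfolding Dset_def PO_def
    by (auto intro: finite_subset)
  then show ?thesis unfolding kendall_def e by simp
qed

lemma card_PB: "card PB = card B choose 2"
proof -
  have fB: "finite B" using B_sub finite_subset by blast
  have "bij_betw (\<lambda>(x,y). {x,y}) PB {S. S \<subseteq> B \<and> card S = 2}"
  proof (rule bij_betw_imageI)
    show "inj_on (\<lambda>(x, y). {x, y}) PB"
      unfolding inj_on_def PB_def by (auto simp: doubleton_eq_iff)
    show "(\<lambda>(x, y). {x, y}) ` PB = {S. S \<subseteq> B \<and> card S = 2}"
    proof
      show "(\<lambda>(x, y). {x, y}) ` PB \<subseteq> {S. S \<subseteq> B \<and> card S = 2}"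
        unfolding PB_def by auto
      show "{S. S \<subseteq> B \<and> card S = 2} \<subseteq> (\<lambda>(x, y). {x, y}) ` PB"
      proof
        fix S assume "S \<in> {S. S \<subseteq> B \<and> card S = 2}"
        then obtain x y where S: "S = {x,y}" "x \<noteq> y" "S \<subseteq> B" by (auto simp: card_2_iff)
        show "S \<in> (\<lambda>(x, y). {x, y}) ` PB"
        proof (cases "x < y")
          case True then show ?thesis using S unfolding PB_def by (auto intro!: image_eqI[where x="(x,y)"])
        next
          case False then have "y < x" using S by auto
          then show ?thesis using S unfolding PB_def by (auto intro!: image_eqI[where x="(y,x)"])
        qed
      qed
    qed
  qed
  then have "card PB = card {S. S \<subseteq> B \<and> card S = 2}" by (rule bij_betw_same_card)
  then show ?thesis using n_subsets[OF fB] by simp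
qed

lemma card_T: "card T = k" unfolding T_def using inja card_image by fastforce
lemma card_B: "card B = n - k"
  unfolding B_def using card_T ima T_def by (simp add: card_Diff_subset finite_subset)

lemma topk_T: "\<rho> \<in> topk n k a \<Longrightarrow> i \<in> {1..k} \<Longrightarrow> inv \<rho> (a i) = i"
  unfolding topk_def by (auto simp: perm_inv_eq)

lemma topk_B: assumes "\<rho> \<in> topk n k a" "y \<in> B" shows "k < inv \<rho> y" "inv \<rho> y \<le> n"
proof -
  have p: "\<rho> permutes {1..n}" and f: "\<forall>i\<in>{1..k}. \<rho> i = a i" using assms unfolding topk_def by auto
  have y: "y \<in> {1..n}" "y \<notin> T" using assms unfolding B_def by auto
  have "inv \<rho> y \<in> {1..n}" using perm_inv_in[OF p y(1)] .
  moreover have "\<rho> (inv \<rho> y) = y" using p by (rule permutes_inverses(1))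
  moreover have "\<not> inv \<rho> y \<le> k"
  proof
    assume h: "inv \<rho> y \<le> k"
    then have "inv \<rho> y \<in> {1..k}" using \<open>inv \<rho> y \<in> {1..n}\<close> by auto
    then have "y \<in> T" using f \<open>\<rho> (inv \<rho> y) = y\<close> unfolding T_def by force
    then show False using y(2) by simp
  qed
  ultimately show "k < inv \<rho> y" "inv \<rho> y \<le> n" by auto
qed

lemma topk_lt_PO:
  assumes "\<rho>1 \<in> topk n k a" "\<rho>2 \<in> topk n k a" "x \<in> {1..n}" "y \<in> {1..n}" "\<not> (x \<in> B \<and> y \<in> B)"
  shows "(inv \<rho>1 x < inv \<rho>1 y) = (inv \<rho>2 x < inv \<rho>2 y)"
proof -
  have xT: "x \<in> T \<or> x \<in> B" and yT: "y \<in> T \<or> y \<in> B" using assms unfolding B_def by auto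
  have pT: "inv \<rho> z = inv_into {1..k} a z \<and> inv \<rho> z \<le> k" if r: "\<rho> \<in> topk n k a" and z: "z \<in> T" for \<rho> z
  proof -
    obtain i where i: "i \<in> {1..k}" "z = a i" using z unfolding T_def by auto
    then show ?thesis
      using topk_T[OF r i(1)] inv_into_f_f[OF inja i(1)] by auto
  qed
  show ?thesis
  proof (cases "x \<in> T")
    case xt: True
    show ?thesis
    proof (cases "y \<in> T")
      case True
      then show ?thesis using pT[OF assms(1) xt] pT[OF assms(2) xt] pT[OF assms(1) True] pT[OF assms(2) True] by simp
    next
      case False
      then have "y \<in> B" using yT by auto
      then have "k < inv \<rho>1 y" "k < inv \<rho>2 y" using topk_B[OF assms(1)] topk_B[OF assms(2)] by auto
      moreover have "inv \<rho>1 x \<le> k" "inv \<rho>2 x \<le> k" using pT[OF assms(1) xt] pT[OF assms(2) xt] by auto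
      ultimately show ?thesis by linarith
    qed
  next
    case False
    then have xb: "x \<in> B" using xT by auto
    then have yt: "y \<in> T" using assms(5) yT by auto
    have "k < inv \<rho>1 x" "k < inv \<rho>2 x" using xb topk_B[OF assms(1)] topk_B[OF assms(2)] by auto
    moreover have "inv \<rho>1 y \<le> k" "inv \<rho>2 y \<le> k" using pT[OF assms(1) yt] pT[OF assms(2) yt] by auto
    ultimately show ?thesis by linarith
  qed
qed


lemma order_eq_pos:
  fixes f g :: "'a \<Rightarrow> nat"
  assumes fS: "finite S" and f: "bij_betw f S {1..m}" and g: "bij_betw g S {1..m}"
    and o: "\<forall>x\<in>S. \<forall>y\<in>S. (f x < f y) = (g x < g y)" and x: "x \<in> S"
  shows "f x = g x"
proof -
  have cf: "card {y\<in>S. f y < f x} = f x - 1" if f: "bij_betw f S {1..m}" and x: "x \<in> S" for f :: "'a \<Rightarrow> nat"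
  proof -
    have fx: "f x \<in> {1..m}" using f x bij_betwE by blast
    have "f ` {y\<in>S. f y < f x} = {1..<f x}"
    proof
      show "f ` {y \<in> S. f y < f x} \<subseteq> {1..<f x}" using f by (auto dest: bij_betwE)
      show "{1..<f x} \<subseteq> f ` {y \<in> S. f y < f x}"
      proof
        fix r assume r: "r \<in> {1..<f x}"
        then have "r \<in> {1..m}" using fx by auto
        then obtain y where "y \<in> S" "f y = r" using f unfolding bij_betw_def by (metis imageE)
        then show "r \<in> f ` {y \<in> S. f y < f x}" using r by auto
      qed
    qed
    moreover have "inj_on f {y\<in>S. f y < f x}" using f unfolding bij_betw_def by (auto intro: inj_on_subset)
    ultimately have "card {y\<in>S. f y < f x} = card {1..<f x}" using card_image by fastforce
    then show ?thesis by simp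
  qed
  have "{y\<in>S. f y < f x} = {y\<in>S. g y < g x}" using o x by auto
  then have "f x - 1 = g x - 1" using cf[OF f x] cf[OF g x] by simp
  moreover have "f x \<ge> 1" "g x \<ge> 1" using f g x bij_betwE by fastforce+
  ultimately show ?thesis by simp
qed

definition "r i = (if i \<in> {k+1..n} then n + k + 1 - i else i)"

lemma rr: "r (r i) = i" unfolding r_def by auto

lemma r_bij: "bij r" by (rule o_bij[of r]) (auto simp: rr fun_eq_iff)

lemma anti_eq: assumes "\<sigma> \<in> topk n k a" shows "antithetic n k a \<sigma> = \<sigma> \<circ> r"
proof
  fix i
  have p: "\<sigma> permutes {1..n}" and f: "\<forall>i\<in>{1..k}. \<sigma> i = a i" using assms unfolding topk_def by auto
  show "antithetic n k a \<sigma> i = (\<sigma> \<circ> r) i"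
  proof (cases "i \<in> {1..k}")
    case True then show ?thesis using f kn unfolding antithetic_def r_def by auto
  next
    case F: False
    show ?thesis
    proof (cases "i \<in> {k+1..n}")
      case True
      have "n + 1 - (i - k) = n + k + 1 - i" using True by auto
      then show ?thesis using True F unfolding antithetic_def r_def by auto
    next
      case False
      then have "i \<notin> {1..n}" using F by auto
      then have "\<sigma> i = i" using p permutes_not_in by fastforce
      then show ?thesis using F False unfolding antithetic_def r_def by auto
    qed
  qed
qed

lemma anti_inv: assumes "\<sigma> \<in> topk n k a" shows "inv (antithetic n k a \<sigma>) x = r (inv \<sigma> x)"
proof -
  have p: "\<sigma> permutes {1..n}" using assms unfolding topk_def by auto
  have b: "bij (\<sigma> \<circ> r)" using bij_comp[OF r_bij permutes_bij[OF p]] .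
  have "(\<sigma> \<circ> r) (r (inv \<sigma> x)) = x" using rr permutes_inverses(1)[OF p] by simp
  then show ?thesis using anti_eq[OF assms] bij_inv_eq_iff[OF b] by metis
qed

lemma r_PO: assumes "p \<in> {1..n}" "q \<in> {1..n}" "\<not> (k < p \<and> k < q)"
  shows "(r p < r q) = (p < q)"
  using assms unfolding r_def by auto

lemma r_PB: assumes "p \<in> {k+1..n}" "q \<in> {k+1..n}"
  shows "(r p < r q) = (q < p)"
  using assms unfolding r_def by auto

lemma anti_PO: assumes s: "\<sigma> \<in> topk n k a" and xy: "(x,y) \<in> PO"
  shows "discordant (antithetic n k a \<sigma>) \<tau> x y = discordant \<sigma> \<tau> x y"
proof -
  have p: "\<sigma> permutes {1..n}" using s unfolding topk_def by auto
  have x: "x \<in> {1..n}" "y \<in> {1..n}" "x < y" "\<not> (x \<in> B \<and> y \<in> B)" using xy unfolding PO_def P_def PB_def by auto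
  have le: "inv \<sigma> z \<le> k" if "z \<in> {1..n}" "z \<notin> B" for z
  proof -
    have "z \<in> T" using that unfolding B_def by auto
    then obtain i where "i \<in> {1..k}" "z = a i" unfolding T_def by auto
    then show ?thesis using topk_T[OF s] by auto
  qed
  have "\<not> (k < inv \<sigma> x \<and> k < inv \<sigma> y)" using le x(1,2,4) by (meson not_le)
  then have e: "(r (inv \<sigma> x) < r (inv \<sigma> y)) = (inv \<sigma> x < inv \<sigma> y)"
    using r_PO perm_inv_in[OF p] x by blast
  have n1: "inv \<sigma> x \<noteq> inv \<sigma> y" "inv \<tau> x \<noteq> inv \<tau> y" using perm_inv_neq[OF p] perm_inv_neq[OF tau] x by auto
  have n2: "r (inv \<sigma> x) \<noteq> r (inv \<sigma> y)" using n1(1) rr[of "inv \<sigma> x"] rr[of "inv \<sigma> y"] by auto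
  have ia: "inv (antithetic n k a \<sigma>) x = r (inv \<sigma> x)" "inv (antithetic n k a \<sigma>) y = r (inv \<sigma> y)"
    using anti_inv[OF s] by auto
  have d: "discordant (antithetic n k a \<sigma>) \<tau> x y \<longleftrightarrow> ((r (inv \<sigma> x) < r (inv \<sigma> y)) \<noteq> (inv \<tau> x < inv \<tau> y))"
    using disc_iff[of "antithetic n k a \<sigma>" x y \<tau>] n1(2) n2 unfolding ia by blast
  show ?thesis using disc_iff[OF n1] d e by blast
qed

lemma anti_PB: assumes s: "\<sigma> \<in> topk n k a" and xy: "(x,y) \<in> PB"
  shows "discordant (antithetic n k a \<sigma>) \<tau> x y = (\<not> discordant \<sigma> \<tau> x y)"
proof -
  have p: "\<sigma> permutes {1..n}" using s unfolding topk_def by auto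
  have x: "x \<in> B" "y \<in> B" "x < y" using xy unfolding PB_def by auto
  have xn: "x \<in> {1..n}" "y \<in> {1..n}" using x B_sub by auto
  have e: "(r (inv \<sigma> x) < r (inv \<sigma> y)) = (inv \<sigma> y < inv \<sigma> x)"
    using r_PB topk_B[OF s x(1)] topk_B[OF s x(2)] by auto
  have n1: "inv \<sigma> x \<noteq> inv \<sigma> y" "inv \<tau> x \<noteq> inv \<tau> y" using perm_inv_neq[OF p] perm_inv_neq[OF tau] x by auto
  have n2: "r (inv \<sigma> x) \<noteq> r (inv \<sigma> y)" using n1(1) rr[of "inv \<sigma> x"] rr[of "inv \<sigma> y"] by auto
  have ia: "inv (antithetic n k a \<sigma>) x = r (inv \<sigma> x)" "inv (antithetic n k a \<sigma>) y = r (inv \<sigma> y)"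
    using anti_inv[OF s] by auto
  have d: "discordant (antithetic n k a \<sigma>) \<tau> x y \<longleftrightarrow> ((r (inv \<sigma> x) < r (inv \<sigma> y)) \<noteq> (inv \<tau> x < inv \<tau> y))"
    using disc_iff[of "antithetic n k a \<sigma>" x y \<tau>] n1(2) n2 unfolding ia by blast
  have "(inv \<sigma> y < inv \<sigma> x) = (\<not> inv \<sigma> x < inv \<sigma> y)" using n1(1) by auto
  then show ?thesis using disc_iff[OF n1] d e by blast
qed


definition "bs = filter (\<lambda>x. x \<notin> T) (map \<tau> [1..<n+1])"
definition "pp i = (if i \<in> {1..k} then a i else if i \<in> {k+1..n} then bs!(i-k-1) else i)"

lemma bs_set: "set bs = B"
proof -
  have "{1..<n+1} = {1..n}" by auto
  then have "set (map \<tau> [1..<n+1]) = \<tau> ` {1..n}" by (simp only: set_map set_upt)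
  also have "\<dots> = {1..n}" using permutes_image[OF tau] .
  finally show ?thesis unfolding bs_def B_def by auto
qed

lemma bs_dist: "distinct bs"
proof -
  have "inj_on \<tau> (set [1..<n+1])" using permutes_inj[OF tau] by (auto intro: inj_on_subset)
  then show ?thesis unfolding bs_def by (simp add: distinct_map)
qed

lemma bs_len: "length bs = n - k"
  using distinct_card[OF bs_dist] bs_set card_B by simp

lemma bs_sorted: "sorted_wrt (\<lambda>x y. inv \<tau> x < inv \<tau> y) bs"
proof -
  have "sorted_wrt (\<lambda>x y. inv \<tau> x < inv \<tau> y) (map \<tau> [1..<n+1])"
    unfolding sorted_wrt_map permutes_inverses(2)[OF tau] by (rule sorted_wrt_upt)
  then show ?thesis unfolding bs_def by (rule sorted_wrt_filter)
qed

lemma pp_perm: "pp permutes {1..n}"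
proof (rule bij_imp_permutes)
  show "\<And>x. x \<notin> {1..n} \<Longrightarrow> pp x = x" unfolding pp_def using kn by auto
  have im: "pp ` {1..n} \<subseteq> {1..n}"
  proof
    fix y assume "y \<in> pp ` {1..n}"
    then obtain i where i: "i \<in> {1..n}" "y = pp i" by auto
    show "y \<in> {1..n}"
    proof (cases "i \<in> {1..k}")
      case True
      then have "a i \<in> {1..n}" using ima by blast
      then show ?thesis using i True unfolding pp_def by auto
    next
      case False
      then have "i - k - 1 < length bs" using i bs_len by auto
      then have "bs ! (i-k-1) \<in> B" using bs_set nth_mem by blast
      then show ?thesis using i False B_sub unfolding pp_def by auto
    qed
  qed
  have inj: "inj_on pp {1..n}"
  proof (rule inj_onI)
    fix i j assume i: "i \<in> {1..n}" and j: "j \<in> {1..n}" and e: "pp i = pp j"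
    have bsB: "bs ! (m-k-1) \<in> B" if "m \<in> {1..n}" "m \<notin> {1..k}" for m
    proof -
      have "m - k - 1 < length bs" using that bs_len by auto
      then show ?thesis using bs_set nth_mem by blast
    qed
    have aT: "a m \<in> T" if "m \<in> {1..k}" for m using that unfolding T_def by auto
    show "i = j"
    proof (cases "i \<in> {1..k}"; cases "j \<in> {1..k}")
      assume "i \<in> {1..k}" "j \<in> {1..k}"
      then show ?thesis using e inja unfolding pp_def by (auto dest: inj_onD)
    next
      assume a1: "i \<in> {1..k}" "j \<notin> {1..k}"
      then have "pp i \<in> T" "pp j \<in> B" using aT bsB[OF j] j unfolding pp_def by auto
      then show ?thesis using e unfolding B_def by auto
    next
      assume a1: "i \<notin> {1..k}" "j \<in> {1..k}"
      then have "pp j \<in> T" "pp i \<in> B" using aT bsB[OF i] i unfolding pp_def by auto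
      then show ?thesis using e unfolding B_def by auto
    next
      assume a1: "i \<notin> {1..k}" "j \<notin> {1..k}"
      then have "bs ! (i-k-1) = bs ! (j-k-1)" using e i j unfolding pp_def by auto
      moreover have "i - k - 1 < length bs" "j - k - 1 < length bs" using i j a1 bs_len by auto
      ultimately have "i - k - 1 = j - k - 1" using bs_dist nth_eq_iff_index_eq by blast
      then show ?thesis using a1 i j by auto
    qed
  qed
  show "bij_betw pp {1..n} {1..n}"
    unfolding bij_betw_def using inj endo_inj_surj[OF _ im inj] by auto
qed

lemma pp_topk: "pp \<in> topk n k a"
  unfolding topk_def using pp_perm unfolding pp_def by auto

lemma pp_inv: "j < n - k \<Longrightarrow> inv pp (bs ! j) = k + 1 + j"
  using perm_inv_eq[OF pp_perm] unfolding pp_def by auto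

lemma pp_B: assumes "x \<in> B" "y \<in> B"
  shows "(inv pp x < inv pp y) = (inv \<tau> x < inv \<tau> y)"
proof -
  obtain i where i: "i < n - k" "x = bs ! i" using assms(1) bs_set bs_len by (metis in_set_conv_nth)
  obtain j where j: "j < n - k" "y = bs ! j" using assms(2) bs_set bs_len by (metis in_set_conv_nth)
  have "(inv \<tau> x < inv \<tau> y) = (i < j)"
  proof (cases "i < j")
    case True then show ?thesis using sorted_wrt_nth_less[OF bs_sorted True] i j bs_len by auto
  next
    case False
    show ?thesis
    proof (cases "i = j")
      case True then show ?thesis using i j by auto
    next
      case F: False
      then have "j < i" using False by auto
      then show ?thesis using sorted_wrt_nth_less[OF bs_sorted \<open>j < i\<close>] i j bs_len False by auto
    qed
  qed
  then show ?thesis using pp_inv i j by auto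
qed


lemma Dset_PB_pp: "Dset PB pp \<tau> = {}"
proof -
  have "\<not> discordant pp \<tau> x y" if "(x,y) \<in> PB" for x y
  proof -
    have x: "x \<in> B" "y \<in> B" "x < y" using that unfolding PB_def by auto
    then have n1: "inv pp x \<noteq> inv pp y" "inv \<tau> x \<noteq> inv \<tau> y"
      using perm_inv_neq[OF pp_perm] perm_inv_neq[OF tau] by auto
    show ?thesis using disc_iff[OF n1] pp_B[OF x(1,2)] by simp
  qed
  then show ?thesis unfolding Dset_def by auto
qed

lemma Dset_PO_same: assumes "\<rho> \<in> topk n k a" shows "Dset PO \<rho> \<tau> = Dset PO pp \<tau>"
proof -
  have p: "\<rho> permutes {1..n}" using assms unfolding topk_def by auto
  have "discordant \<rho> \<tau> x y = discordant pp \<tau> x y" if "(x,y) \<in> PO" for x y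
  proof -
    have x: "x \<in> {1..n}" "y \<in> {1..n}" "x < y" "\<not> (x \<in> B \<and> y \<in> B)"
      using that unfolding PO_def P_def PB_def by auto
    have n1: "inv \<rho> x \<noteq> inv \<rho> y" "inv \<tau> x \<noteq> inv \<tau> y" "inv pp x \<noteq> inv pp y"
      using perm_inv_neq[OF p] perm_inv_neq[OF tau] perm_inv_neq[OF pp_perm] x by auto
    show ?thesis using disc_iff[OF n1(1,2)] disc_iff[OF n1(3,2)] topk_lt_PO[OF assms pp_topk x(1,2,4)]
      by simp
  qed
  then show ?thesis unfolding Dset_def by auto
qed

lemma pp_min: "\<rho> \<in> topk n k a \<Longrightarrow> kendall n pp \<tau> \<le> kendall n \<rho> \<tau>"
  using kendall_split[of pp \<tau>] kendall_split[of \<rho> \<tau>] Dset_PO_same Dset_PB_pp by simp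

lemma pp_unique: assumes r: "\<rho> \<in> topk n k a" and le: "kendall n \<rho> \<tau> \<le> kendall n pp \<tau>"
  shows "\<rho> = pp"
proof -
  have p: "\<rho> permutes {1..n}" using r unfolding topk_def by auto
  have "card (Dset PB \<rho> \<tau>) = 0"
    using kendall_split[of pp \<tau>] kendall_split[of \<rho> \<tau>] Dset_PO_same[OF r] Dset_PB_pp le by simp
  moreover have "finite (Dset PB \<rho> \<tau>)" using finPB unfolding Dset_def by (auto intro: finite_subset)
  ultimately have E: "Dset PB \<rho> \<tau> = {}" by simp
  have ordB0: "(inv \<rho> x < inv \<rho> y) = (inv \<tau> x < inv \<tau> y)" if "x \<in> B" "y \<in> B" "x < y" for x y
  proof -
    have "(x,y) \<in> PB" using that unfolding PB_def by auto
    then have "\<not> discordant \<rho> \<tau> x y" using E unfolding Dset_def by auto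
    moreover have n1: "inv \<rho> x \<noteq> inv \<rho> y" "inv \<tau> x \<noteq> inv \<tau> y"
      using perm_inv_neq[OF p] perm_inv_neq[OF tau] that by auto
    ultimately show ?thesis using disc_iff[OF n1] by simp
  qed
  have ordB: "(inv \<rho> x < inv \<rho> y) = (inv pp x < inv pp y)" if "x \<in> B" "y \<in> B" for x y
  proof (cases "x < y")
    case True then show ?thesis using ordB0 that pp_B by simp
  next
    case False
    show ?thesis
    proof (cases "x = y")
      case True then show ?thesis by simp
    next
      case F: False
      then have "y < x" using False by auto
      have n1: "inv \<rho> x \<noteq> inv \<rho> y" "inv \<tau> x \<noteq> inv \<tau> y" "inv pp x \<noteq> inv pp y"
        using perm_inv_neq[OF p] perm_inv_neq[OF tau] perm_inv_neq[OF pp_perm] F by auto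
      have "(inv \<rho> y < inv \<rho> x) = (inv pp y < inv pp x)"
        using ordB0[OF that(2,1) \<open>y < x\<close>] pp_B[OF that(2,1)] by simp
      then show ?thesis using n1 by auto
    qed
  qed
  have ord: "\<forall>x\<in>{1..n}. \<forall>y\<in>{1..n}. (inv \<rho> x < inv \<rho> y) = (inv pp x < inv pp y)"
    using ordB topk_lt_PO[OF r pp_topk] by blast
  have eqinv: "inv \<rho> x = inv pp x" if "x \<in> {1..n}" for x
    using order_eq_pos[of "{1..n}" "inv \<rho>" n "inv pp", OF _ permutes_imp_bij[OF permutes_inv[OF p]]
        permutes_imp_bij[OF permutes_inv[OF pp_perm]] ord that] by simp
  show ?thesis
  proof
    fix i
    show "\<rho> i = pp i"
    proof (cases "i \<in> {1..n}")
      case True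
      then have "\<rho> i \<in> {1..n}" using permutes_in_image[OF p] by simp
      then have "inv pp (\<rho> i) = i" using eqinv permutes_inverses(2)[OF p] by metis
      then show ?thesis using perm_inv_eq[OF pp_perm] by metis
    next
      case False then show ?thesis using permutes_not_in[OF p] permutes_not_in[OF pp_perm] by metis
    qed
  qed
qed

lemma proj_eq: "proj n k a \<tau> = pp"
  unfolding proj_def
proof (rule the_equality)
  show "pp \<in> topk n k a \<and> (\<forall>\<rho>'\<in>topk n k a. kendall n pp \<tau> \<le> kendall n \<rho>' \<tau>)"
    using pp_topk pp_min by auto
  show "\<And>\<rho>. \<rho> \<in> topk n k a \<and> (\<forall>\<rho>'\<in>topk n k a. kendall n \<rho> \<tau> \<le> kendall n \<rho>' \<tau>) \<Longrightarrow> \<rho> = pp"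
    using pp_unique pp_topk by blast
qed

lemma kendall_sigma_pp: assumes s: "\<sigma> \<in> topk n k a"
  shows "kendall n \<sigma> pp = card (Dset PB \<sigma> \<tau>)"
proof -
  have p: "\<sigma> permutes {1..n}" using s unfolding topk_def by auto
  have "Dset PO \<sigma> pp = {}"
  proof -
    have "\<not> discordant \<sigma> pp x y" if "(x,y) \<in> PO" for x y
    proof -
      have x: "x \<in> {1..n}" "y \<in> {1..n}" "x < y" "\<not> (x \<in> B \<and> y \<in> B)"
        using that unfolding PO_def P_def PB_def by auto
      have n1: "inv \<sigma> x \<noteq> inv \<sigma> y" "inv pp x \<noteq> inv pp y"
        using perm_inv_neq[OF p] perm_inv_neq[OF pp_perm] x by auto
      show ?thesis using disc_iff[OF n1] topk_lt_PO[OF s pp_topk x(1,2,4)] by simp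
    qed
    then show ?thesis unfolding Dset_def by auto
  qed
  moreover have "Dset PB \<sigma> pp = Dset PB \<sigma> \<tau>"
  proof -
    have "discordant \<sigma> pp x y = discordant \<sigma> \<tau> x y" if "(x,y) \<in> PB" for x y
    proof -
      have x: "x \<in> B" "y \<in> B" "x < y" using that unfolding PB_def by auto
      have n1: "inv \<sigma> x \<noteq> inv \<sigma> y" "inv pp x \<noteq> inv pp y" "inv \<tau> x \<noteq> inv \<tau> y"
        using perm_inv_neq[OF p] perm_inv_neq[OF pp_perm] perm_inv_neq[OF tau] x by auto
      show ?thesis using disc_iff[OF n1(1,2)] disc_iff[OF n1(1,3)] pp_B[OF x(1,2)] by simp
    qed
    then show ?thesis unfolding Dset_def by auto
  qed
  ultimately show ?thesis using kendall_split[of \<sigma> pp] by simp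
qed

lemma main: assumes s: "\<sigma> \<in> topk n k a"
  shows "int (kendall n (antithetic n k a \<sigma>) \<tau>)
         = int (kendall n \<sigma> \<tau>) + int ((n - k) choose 2)
           - 2 * int (kendall n \<sigma> (proj n k a \<tau>))"
proof -
  let ?A = "antithetic n k a \<sigma>"
  have e1: "Dset PO ?A \<tau> = Dset PO \<sigma> \<tau>"
  proof (rule set_eqI)
    fix z show "z \<in> Dset PO ?A \<tau> \<longleftrightarrow> z \<in> Dset PO \<sigma> \<tau>"
    proof -
      obtain x y where z: "z = (x,y)" by (cases z)
      show ?thesis using anti_PO[OF s, of x y] unfolding z Dset_def by auto
    qed
  qed
  have e2: "Dset PB ?A \<tau> = PB - Dset PB \<sigma> \<tau>"
  proof (rule set_eqI)
    fix z show "z \<in> Dset PB ?A \<tau> \<longleftrightarrow> z \<in> PB - Dset PB \<sigma> \<tau>"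
    proof -
      obtain x y where z: "z = (x,y)" by (cases z)
      show ?thesis using anti_PB[OF s, of x y] unfolding z Dset_def by auto
    qed
  qed
  have sub: "Dset PB \<sigma> \<tau> \<subseteq> PB" unfolding Dset_def by auto
  have c2: "card (Dset PB ?A \<tau>) = card PB - card (Dset PB \<sigma> \<tau>)"
    unfolding e2 by (rule card_Diff_subset[OF finite_subset[OF sub finPB] sub])
  have k1: "kendall n ?A \<tau> = card (Dset PO \<sigma> \<tau>) + (card PB - card (Dset PB \<sigma> \<tau>))"
    using kendall_split[of ?A \<tau>] unfolding e1 c2 .
  have le: "card (Dset PB \<sigma> \<tau>) \<le> card PB" using card_mono[OF finPB sub] .
  have cPB: "card PB = (n - k) choose 2" using card_PB card_B by simp
  have k2: "kendall n \<sigma> \<tau> = card (Dset PO \<sigma> \<tau>) + card (Dset PB \<sigma> \<tau>)" by (rule kendall_split)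
  have k3: "kendall n \<sigma> (proj n k a \<tau>) = card (Dset PB \<sigma> \<tau>)"
    unfolding proj_eq by (rule kendall_sigma_pp[OF s])
  show ?thesis unfolding k1 k2 k3 cPB[symmetric] using le by linarith
qed

end

theorem lemma6:
  fixes n k :: nat and a \<sigma> \<tau> :: "nat \<Rightarrow> nat"
  assumes "k \<le> n"
    and "inj_on a {1..k}" and "a ` {1..k} \<subseteq> {1..n}"
    and "\<sigma> \<in> topk n k a"
    and "\<tau> permutes {1..n}"
  shows "int (kendall n (antithetic n k a \<sigma>) \<tau>)
         = int (kendall n \<sigma> \<tau>) + int ((n - k) choose 2)
           - 2 * int (kendall n \<sigma> (proj n k a \<tau>))"
proof -
  interpret L n k a \<tau> using assms by unfold_locales
  show ?thesis using main[OF assms(4)] .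
qed

end
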